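(* Let $H$ be a digraph (possibly with loops) and let $D$ be an $H$-colored transitive digraph. If $k \geq 2$, then $D$ has a $(k,H)$-kernel.
   Context: All digraphs are finite. A digraph $D$ is transitive if for all distinct $u,v\in V(D)$, whenever there is a directed $uv$-path of length $2$, the arc $(u,v)$ belongs to $A(D)$. $D$ has no loops and comes with a map $\rho: A(D)\to V(H)$. For a walk $W=(x_0,\ldots,x_n)$ in $D$, there is an obstruction on $x_i$ if $(\rho(x_{i-1},x_i),\rho(x_i,x_{i+1})) \notin A(H)$; for an open walk this is considered at internal vertices $x_i$, $1\le i\le n-1$, for a closed walk at all $i\in\{0,\ldots,n-1\}$ with indices modulo $n$. $O_H(W)$ is the set of indices with an obstruction; the $H$-length is $l_H(W)=|O_H(W)|+1$ for open $W$ and $|O_H(W)|$ for closed $W$. A $(k,H)$-kernel ($k\ge2$) is a set $S\subseteq V(D)$ such that for every two distinct $u,v\in S$ every directed $uv$-path in $D$ has $H$-length at least $k$, and for every $x\in V(D)\setminus S$ there is a directed path from $x$ to a vertex of $S$ of $H$-length at most $k-1$. *)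

theory Defs
  imports Main
begin

definition digraph :: "'a set \<Rightarrow> ('a \<times> 'a) set \<Rightarrow> bool" where
  "digraph V A \<longleftrightarrow> finite V \<and> A \<subseteq> V \<times> V"

definition loopless :: "('a \<times> 'a) set \<Rightarrow> bool" where
  "loopless A \<longleftrightarrow> (\<forall>x. (x, x) \<notin> A)"

definition H_colored :: "'a set \<Rightarrow> ('a \<times> 'a) set \<Rightarrow> 'c set \<Rightarrow> ('a \<times> 'a \<Rightarrow> 'c) \<Rightarrow> bool" where
  "H_colored V A VH \<rho> \<longleftrightarrow> digraph V A \<and> loopless A \<and> (\<forall>a\<in>A. \<rho> a \<in> VH)"

definition is_walk :: "('a \<times> 'a) set \<Rightarrow> 'a list \<Rightarrow> bool" where
  "is_walk A xs \<longleftrightarrow> xs \<noteq> [] \<and> (\<forall>i. i + 1 < length xs \<longrightarrow> (xs ! i, xs ! (i + 1)) \<in> A)"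

definition is_path :: "('a \<times> 'a) set \<Rightarrow> 'a \<Rightarrow> 'a \<Rightarrow> 'a list \<Rightarrow> bool" where
  "is_path A u v xs \<longleftrightarrow> is_walk A xs \<and> distinct xs \<and> hd xs = u \<and> last xs = v"

definition transitive_digraph :: "('a \<times> 'a) set \<Rightarrow> bool" where
  "transitive_digraph A \<longleftrightarrow>
     (\<forall>u v w. u \<noteq> v \<longrightarrow> (u, w) \<in> A \<longrightarrow> (w, v) \<in> A \<longrightarrow> (u, v) \<in> A)"

definition obstructions :: "('c \<times> 'c) set \<Rightarrow> ('a \<times> 'a \<Rightarrow> 'c) \<Rightarrow> 'a list \<Rightarrow> nat set" where
  "obstructions AH \<rho> xs =
     {i. 1 \<le> i \<and> i + 1 < length xs \<and>
         (\<rho> (xs ! (i - 1), xs ! i), \<rho> (xs ! i, xs ! (i + 1))) \<notin> AH}"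

definition H_length :: "('c \<times> 'c) set \<Rightarrow> ('a \<times> 'a \<Rightarrow> 'c) \<Rightarrow> 'a list \<Rightarrow> nat" where
  "H_length AH \<rho> xs = card (obstructions AH \<rho> xs) + 1"

definition kH_kernel ::
  "'a set \<Rightarrow> ('a \<times> 'a) set \<Rightarrow> ('c \<times> 'c) set \<Rightarrow> ('a \<times> 'a \<Rightarrow> 'c) \<Rightarrow> nat \<Rightarrow> 'a set \<Rightarrow> bool" where
  "kH_kernel V A AH \<rho> k S \<longleftrightarrow>
     S \<subseteq> V \<and>
     (\<forall>u\<in>S. \<forall>v\<in>S. u \<noteq> v \<longrightarrow> (\<forall>xs. is_path A u v xs \<longrightarrow> H_length AH \<rho> xs \<ge> k)) \<and>
     (\<forall>x\<in>V - S. \<exists>v\<in>S. \<exists>xs. is_path A x v xs \<and> H_length AH \<rho> xs \<le> k - 1)"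

end

theory Submission
  imports Defs
begin

lemma walk_cons2:
  "is_walk A (a # b # zs) \<longleftrightarrow> (a, b) \<in> A \<and> is_walk A (b # zs)"
proof
  assume h: "is_walk A (a # b # zs)"
  have "0 + 1 < length (a # b # zs)" by simp
  hence "((a # b # zs) ! 0, (a # b # zs) ! (0 + 1)) \<in> A" using h unfolding is_walk_def by blast
  hence "(a, b) \<in> A" by simp
  moreover have "is_walk A (b # zs)" unfolding is_walk_def
  proof (intro conjI allI impI)
    fix i assume "i + 1 < length (b # zs)"
    hence "Suc i + 1 < length (a # b # zs)" by simp
    hence "((a # b # zs) ! Suc i, (a # b # zs) ! (Suc i + 1)) \<in> A" using h unfolding is_walk_def by blast
    thus "((b # zs) ! i, (b # zs) ! (i + 1)) \<in> A" by simp
  qed simp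
  ultimately show "(a, b) \<in> A \<and> is_walk A (b # zs)" by blast
next
  assume h: "(a, b) \<in> A \<and> is_walk A (b # zs)"
  show "is_walk A (a # b # zs)" unfolding is_walk_def
  proof (intro conjI allI impI)
    fix i assume i: "i + 1 < length (a # b # zs)"
    show "((a # b # zs) ! i, (a # b # zs) ! (i + 1)) \<in> A"
    proof (cases i)
      case 0 thus ?thesis using h by simp
    next
      case (Suc j)
      hence "j + 1 < length (b # zs)" using i by simp
      hence "((b # zs) ! j, (b # zs) ! (j + 1)) \<in> A" using h unfolding is_walk_def by blast
      thus ?thesis using Suc by simp
    qed
  qed simp
qed

lemma walk_arc:
  assumes tr: "transitive_digraph A"
  shows "is_walk A (a # ys) \<Longrightarrow> distinct (a # ys) \<Longrightarrow> ys \<noteq> [] \<Longrightarrow> (a, last ys) \<in> A"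
proof (induction ys arbitrary: a)
  case Nil thus ?case by simp
next
  case (Cons b zs)
  show ?case
  proof (cases "zs = []")
    case True thus ?thesis using Cons.prems walk_cons2[of A a b zs] by simp
  next
    case False
    have ab: "(a, b) \<in> A" and wb: "is_walk A (b # zs)" using Cons.prems walk_cons2[of A a b zs] by auto
    have "(b, last zs) \<in> A" using Cons.IH[OF wb] Cons.prems False by simp
    moreover have "a \<noteq> last zs" using Cons.prems False by (metis distinct.simps(2) last_in_set list.set_intros(2))
    ultimately show ?thesis using ab tr False unfolding transitive_digraph_def by auto
  qed
qed

lemma path_arc:
  assumes tr: "transitive_digraph A" and p: "is_path A u v xs" and uv: "u \<noteq> v"
  shows "(u, v) \<in> A"
proof -
  obtain a ys where xs: "xs = a # ys" using p unfolding is_path_def is_walk_def by (cases xs) auto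
  have "ys \<noteq> []" using p uv xs unfolding is_path_def by auto
  thus ?thesis using walk_arc[OF tr, of a ys] p xs unfolding is_path_def by auto
qed

theorem corollary13:
  fixes V :: "'a set" and A :: "('a \<times> 'a) set"
    and VH :: "'c set" and AH :: "('c \<times> 'c) set"
    and \<rho> :: "'a \<times> 'a \<Rightarrow> 'c" and k :: nat
  assumes "digraph VH AH"
    and "H_colored V A VH \<rho>"
    and "transitive_digraph A"
    and "k \<ge> 2"
  shows "\<exists>S. kH_kernel V A AH \<rho> k S"
proof -
  have finV: "finite V" and AV: "A \<subseteq> V \<times> V" and ll: "\<And>x. (x, x) \<notin> A"
    using assms(2) unfolding H_colored_def digraph_def loopless_def by auto
  have tr: "\<And>u v w. u \<noteq> v \<Longrightarrow> (u, w) \<in> A \<Longrightarrow> (w, v) \<in> A \<Longrightarrow> (u, v) \<in> A"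
    using assms(3) unfolding transitive_digraph_def by blast
  define T where "T = {x\<in>V. \<forall>y. (x, y) \<in> A \<longrightarrow> (y, x) \<in> A}"
  define R where "R = {(y, x). (x, y) \<in> A \<and> (y, x) \<notin> A}"
  have RV: "R \<subseteq> V \<times> V" using AV unfolding R_def by auto
  have transR: "trans R" unfolding R_def trans_def
  proof (clarsimp)
    fix x y z assume a: "(y, x) \<in> A" "(x, y) \<notin> A" "(z, y) \<in> A" "(y, z) \<notin> A"
    have "z \<noteq> x" using a by auto
    hence zx: "(z, x) \<in> A" using tr a by blast
    have "(x, z) \<notin> A"
    proof
      assume "(x, z) \<in> A"
      moreover have "x \<noteq> y" using a ll by auto
      ultimately show False using tr a by blast
    qed
    thus "(z, x) \<in> A \<and> (x, z) \<notin> A" using zx by blast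
  qed
  have irrR: "\<And>x. (x, x) \<notin> R" unfolding R_def by auto
  have wfR: "wf R"
  proof (rule finite_acyclic_wf)
    show "finite R" using RV finV by (meson finite_SigmaI finite_subset)
    show "acyclic R" unfolding acyclic_def using trancl_id[OF transR] irrR by simp
  qed
  have reach: "\<And>x. x \<in> V \<Longrightarrow> x \<in> T \<or> (\<exists>t\<in>T. (x, t) \<in> A)"
  proof -
    fix x show "x \<in> V \<Longrightarrow> x \<in> T \<or> (\<exists>t\<in>T. (x, t) \<in> A)"
    proof (induction x rule: wf_induct_rule[OF wfR])
      case (1 x)
      show ?case
      proof (cases "x \<in> T")
        case False
        then obtain y where y: "(x, y) \<in> A" "(y, x) \<notin> A" using 1(2) unfolding T_def by auto
        have yV: "y \<in> V" using y AV by auto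
        have "(y, x) \<in> R" using y unfolding R_def by auto
        from 1(1)[OF this yV] show ?thesis
        proof
          assume "y \<in> T" thus ?thesis using y by blast
        next
          assume "\<exists>t\<in>T. (y, t) \<in> A"
          then obtain t where t: "t \<in> T" "(y, t) \<in> A" by blast
          have "x \<noteq> t" using t y by auto
          thus ?thesis using tr y t by blast
        qed
      qed simp
    qed
  qed
  have symT: "\<And>t s. t \<in> T \<Longrightarrow> (t, s) \<in> A \<Longrightarrow> (s, t) \<in> A" unfolding T_def by blast
  define Ind where "Ind = {S. S \<subseteq> T \<and> (\<forall>u\<in>S. \<forall>v\<in>S. (u, v) \<notin> A)}"
  have "finite Ind"
  proof -
    have "Ind \<subseteq> Pow V" unfolding Ind_def T_def by auto
    thus ?thesis using finV by (meson finite_Pow_iff finite_subset)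
  qed
  moreover have "{} \<in> Ind" unfolding Ind_def by auto
  ultimately obtain S where S: "S \<in> Ind" and Smax: "\<And>S'. S' \<in> Ind \<Longrightarrow> S \<subseteq> S' \<Longrightarrow> S = S'"
    using finite_has_maximal[of Ind] by blast
  have STV: "S \<subseteq> T" "T \<subseteq> V" using S unfolding Ind_def T_def by auto
  have indS: "\<And>u v. u \<in> S \<Longrightarrow> v \<in> S \<Longrightarrow> (u, v) \<notin> A" using S unfolding Ind_def by auto
  have absT: "\<And>t. t \<in> T \<Longrightarrow> t \<notin> S \<Longrightarrow> \<exists>s\<in>S. (t, s) \<in> A"
  proof -
    fix t assume t: "t \<in> T" "t \<notin> S"
    have "insert t S \<notin> Ind" using Smax[of "insert t S"] t by auto
    hence "\<exists>u\<in>insert t S. \<exists>v\<in>insert t S. (u, v) \<in> A" using t STV unfolding Ind_def by auto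
    then obtain u v where uv: "u \<in> insert t S" "v \<in> insert t S" "(u, v) \<in> A" by blast
    show "\<exists>s\<in>S. (t, s) \<in> A"
    proof (cases "u = t")
      case True
      hence "v \<noteq> t" using uv ll by auto
      thus ?thesis using uv True by auto
    next
      case False
      hence uS: "u \<in> S" using uv by auto
      hence "v = t" using uv indS by auto
      thus ?thesis using uv uS symT[of u t] STV by blast
    qed
  qed
  have abs: "\<And>x. x \<in> V \<Longrightarrow> x \<notin> S \<Longrightarrow> \<exists>s\<in>S. (x, s) \<in> A"
  proof -
    fix x assume x: "x \<in> V" "x \<notin> S"
    show "\<exists>s\<in>S. (x, s) \<in> A"
    proof (cases "x \<in> T")
      case True thus ?thesis using absT x by blast
    next
      case False
      then obtain t where t: "t \<in> T" "(x, t) \<in> A" using reach x by blast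
      show ?thesis
      proof (cases "t \<in> S")
        case True thus ?thesis using t by blast
      next
        case False
        then obtain s where s: "s \<in> S" "(t, s) \<in> A" using absT t by blast
        have "x \<noteq> s" using s STV \<open>x \<notin> T\<close> by auto
        thus ?thesis using tr t s by blast
      qed
    qed
  qed
  have "kH_kernel V A AH \<rho> k S" unfolding kH_kernel_def
  proof (intro conjI ballI impI allI)
    show "S \<subseteq> V" using STV by auto
  next
    fix u v xs assume "u \<in> S" "v \<in> S" "u \<noteq> v" "is_path A u v xs"
    thus "k \<le> H_length AH \<rho> xs" using path_arc[OF assms(3)] indS by blast
  next
    fix x assume x: "x \<in> V - S"
    then obtain s where s: "s \<in> S" "(x, s) \<in> A" using abs by blast
    have "x \<noteq> s" using x s by auto
    have p: "is_path A x s [x, s]" unfolding is_path_def is_walk_def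
      using s \<open>x \<noteq> s\<close> by (auto simp: nth_Cons split: nat.splits)
    have "obstructions AH \<rho> [x, s] = {}" unfolding obstructions_def by auto
    hence "H_length AH \<rho> [x, s] \<le> k - 1" unfolding H_length_def using assms(4) by simp
    thus "\<exists>v\<in>S. \<exists>xs. is_path A x v xs \<and> H_length AH \<rho> xs \<le> k - 1" using p s by blast
  qed
  thus ?thesis by blast
qed

end
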